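(* For every $n\in\mathbb{N}$, the graph class $\mathcal{F}_n$ satisfies $$\mathcal{N}(\mathcal{F}_n,\delta^{\mathcal{T}}_\square,4)\le\frac{2\,|\mathcal{F}_n/\!\sim_{\mathrm{WL}}|}{n}.$$
   Context: Let $P_n$ be the path with vertex set $\{v_1,\dots,v_n\}$ and edges $\{v_1,v_2\},\dots,\{v_{n-1},v_n\}$, and $\mathcal{P}(n)$ the set of graphs that are disjoint unions of paths with $n$ vertices in total. $\mathcal{F}_n$ is the set of graphs with vertex set $V(P_n)\,\dot\cup\,V(P)$ and edge set $E(P)\,\dot\cup\,E(P_n)\,\dot\cup\,\{\{u,v\}\}$, for some $P\in\mathcal{P}(n)$, $u\in V(P)$ and $v\in V(P_n)$ (graphs considered up to isomorphism). $\mathcal{F}_n/\!\sim_{\mathrm{WL}}$ is the set of equivalence classes of $\mathcal{F}_n$ under $1$-WL indistinguishability (1-WL: constant initial colors, $C_t(v)=\mathsf{RELABEL}(C_{t-1}(v),\{\!\!\{C_{t-1}(w):w\in N(v)\}\!\!\})$ with injective $\mathsf{RELABEL}$; graphs indistinguishable if the color multisets agree at every iteration). Tree distance: for graphs $G,H$ on the same number $N$ of vertices with adjacency matrices $\vec{A}(G),\vec{A}(H)$, $\delta^{\mathcal{T}}_\square(G,H)=\min_{\vec{S}}\|\vec{A}(G)\vec{S}-\vec{S}\vec{A}(H)\|_\square$ over $N\times N$ doubly-stochastic matrices, where $\|\vec{M}\|_\square=\max_{S,T\subseteq[N]}|\sum_{i\in S,j\in T}m_{ij}|$. $\mathcal{N}(\mathcal{X},d,\varepsilon)$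 is the minimum cardinality of a subset $C\subseteq\mathcal{X}$ such that every $x\in\mathcal{X}$ has $y\in C$ with $d(x,y)\le\varepsilon$. *)

theory Defs
  imports Complex_Main "HOL-Library.Multiset"
begin

text \<open>Graphs on the vertex set {0..<N} are given by an adjacency relation
  E :: nat \<Rightarrow> nat \<Rightarrow> bool (symmetric, irreflexive, and false outside {0..<N}).\<close>

type_synonym graph = "nat \<Rightarrow> nat \<Rightarrow> bool"

text \<open>The class F_n, as labelled graphs on {0..<2n} (closed under relabelling).
  Positions 0..<n carry the path P_n (edges between consecutive positions);
  positions n..<2n carry a disjoint union of paths P on n vertices, laid out
  consecutively, where the set B marks the positions i after which the
  current path ends; finally one extra edge joins position u (in P) and
  position v (in P_n).  The bijection sigma places positions on vertices.\<close>

definition F_class :: "nat \<Rightarrow> graph set" where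
  "F_class n = {E. \<exists>\<sigma> B u v.
      bij_betw \<sigma> {0..<2*n} {0..<2*n} \<and> B \<subseteq> {n..<2*n} \<and>
      n \<le> u \<and> u < 2*n \<and> v < n \<and>
      (\<forall>x y. E x y \<longleftrightarrow>
         (\<exists>i. ((x = \<sigma> i \<and> y = \<sigma> (Suc i)) \<or> (y = \<sigma> i \<and> x = \<sigma> (Suc i))) \<and>
              (Suc i < n \<or> (n \<le> i \<and> Suc i < 2*n \<and> i \<notin> B)))
         \<or> (x = \<sigma> u \<and> y = \<sigma> v) \<or> (y = \<sigma> u \<and> x = \<sigma> v))}"

definition adj :: "graph \<Rightarrow> nat \<Rightarrow> nat \<Rightarrow> real" where
  "adj E i j = (if E i j then 1 else 0)"

definition doubly_stochastic :: "nat \<Rightarrow> (nat \<Rightarrow> nat \<Rightarrow> real) \<Rightarrow> bool" where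
  "doubly_stochastic N S \<longleftrightarrow>
     (\<forall>i<N. \<forall>j<N. 0 \<le> S i j) \<and>
     (\<forall>i<N. (\<Sum>j<N. S i j) = 1) \<and> (\<forall>j<N. (\<Sum>i<N. S i j) = 1)"

definition cut_norm :: "nat \<Rightarrow> (nat \<Rightarrow> nat \<Rightarrow> real) \<Rightarrow> real" where
  "cut_norm N M = Max {\<bar>\<Sum>i\<in>S. \<Sum>j\<in>T. M i j\<bar> | S T. S \<subseteq> {0..<N} \<and> T \<subseteq> {0..<N}}"

definition tree_dist :: "nat \<Rightarrow> graph \<Rightarrow> graph \<Rightarrow> real" where
  "tree_dist N G H = Inf ((\<lambda>S. cut_norm N (\<lambda>i j.
        (\<Sum>k<N. adj G i k * S k j) - (\<Sum>k<N. S i k * adj H k j)))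
      ` {S. doubly_stochastic N S})"

definition covering_number :: "'a set \<Rightarrow> ('a \<Rightarrow> 'a \<Rightarrow> real) \<Rightarrow> real \<Rightarrow> nat" where
  "covering_number X d \<epsilon> =
     (LEAST k. \<exists>C. C \<subseteq> X \<and> finite C \<and> card C = k \<and> (\<forall>x\<in>X. \<exists>y\<in>C. d x y \<le> \<epsilon>))"

text \<open>1-WL colour refinement.  Colours are represented canonically by the
  datatype below: the constructor WL_Step is an injective RELABEL.\<close>

datatype wl_color = WL_Init | WL_Step wl_color "wl_color multiset"

fun wl :: "nat \<Rightarrow> graph \<Rightarrow> nat \<Rightarrow> nat \<Rightarrow> wl_color" where
  "wl N E 0 v = WL_Init"
| "wl N E (Suc t) v =
     WL_Step (wl N E t v) (image_mset (wl N E t) (mset_set {w. w < N \<and> E v w}))"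

definition wl_equiv :: "nat \<Rightarrow> graph \<Rightarrow> graph \<Rightarrow> bool" where
  "wl_equiv N G H \<longleftrightarrow>
     (\<forall>t. image_mset (wl N G t) (mset_set {0..<N}) = image_mset (wl N H t) (mset_set {0..<N}))"

definition wl_indist_rel :: "nat \<Rightarrow> graph set \<Rightarrow> (graph \<times> graph) set" where
  "wl_indist_rel N X = {(G, H). G \<in> X \<and> H \<in> X \<and> wl_equiv N G H}"

end

theory Submission
  imports Defs
begin


fun cdeg :: "wl_color \<Rightarrow> nat" where
  "cdeg WL_Init = 0"
| "cdeg (WL_Step c M) = size M"

fun nearD :: "nat \<Rightarrow> nat \<Rightarrow> wl_color \<Rightarrow> bool" where
  "nearD d 0 c = (cdeg c = d)"
| "nearD d (Suc s) WL_Init = False"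
| "nearD d (Suc s) (WL_Step c M) = (nearD d s c \<or> (\<exists>c'\<in>#M. nearD d s c'))"

fun reach :: "graph \<Rightarrow> nat \<Rightarrow> nat \<Rightarrow> nat \<Rightarrow> nat \<Rightarrow> bool" where
  "reach E N 0 x y = (x = y)"
| "reach E N (Suc s) x y = (reach E N s x y \<or> (\<exists>z<N. E x z \<and> reach E N s z y))"

definition deg :: "graph \<Rightarrow> nat \<Rightarrow> nat \<Rightarrow> nat" where
  "deg E N x = card {w. w < N \<and> E x w}"

lemma cdeg_wl: "cdeg (wl N E (Suc t) x) = deg E N x"
  by (simp add: deg_def size_mset_set)

lemma nearD_wl:
  assumes "s < t" "x < N"
  shows "nearD d s (wl N E t x) \<longleftrightarrow> (\<exists>w<N. reach E N s x w \<and> deg E N w = d)"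
  using assms
proof (induction s arbitrary: t x)
  case 0
  then obtain t' where t: "t = Suc t'" by (cases t) auto
  show ?case using 0 by (auto simp: t deg_def size_mset_set)
next
  case (Suc s)
  then obtain t' where t: "t = Suc t'" and st: "s < t'" by (cases t) auto
  have fin: "finite {w. w < N \<and> E x w}" by simp
  have "nearD d (Suc s) (wl N E t x) \<longleftrightarrow>
        nearD d s (wl N E t' x) \<or> (\<exists>z\<in>{w. w < N \<and> E x w}. nearD d s (wl N E t' z))"
    by (simp add: t fin)
  also have "\<dots> \<longleftrightarrow> (\<exists>w<N. reach E N s x w \<and> deg E N w = d) \<or>
        (\<exists>z\<in>{w. w < N \<and> E x w}. \<exists>w<N. reach E N s z w \<and> deg E N w = d)"
    using Suc.IH[OF st] Suc.prems by auto
  also have "\<dots> \<longleftrightarrow> (\<exists>w<N. reach E N (Suc s) x w \<and> deg E N w = d)"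
    by auto
  finally show ?case .
qed

lemma reach_mono: "reach E N s x y \<Longrightarrow> s \<le> s' \<Longrightarrow> reach E N s' x y"
  by (induction s' ) (auto simp: le_Suc_eq)

lemma reach_snoc: "reach E N s x y \<Longrightarrow> E y z \<Longrightarrow> z < N \<Longrightarrow> reach E N (Suc s) x z"
proof (induction s arbitrary: x)
  case 0 then show ?case by auto
next
  case (Suc s)
  from Suc.prems(1) show ?case
  proof (cases rule: disjE[OF Suc.prems(1)[simplified]])
    case 1 with Suc show ?thesis by auto
  next
    case 2 with Suc show ?thesis by auto
  qed
qed

lemma count_filter_card:
  "size (filter_mset Q (image_mset f (mset_set A))) = card {x\<in>A. Q (f x)}" if "finite A"
proof -
  have "filter_mset Q (image_mset f (mset_set A)) = image_mset f (filter_mset (\<lambda>x. Q (f x)) (mset_set A))"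
    by (simp add: filter_mset_image_mset)
  then show ?thesis using that by (simp add: filter_mset_mset_set size_mset_set)
qed

lemma wl_equiv_count:
  assumes "wl_equiv N G H"
  shows "card {x. x < N \<and> Q (wl N G t x)} = card {x. x < N \<and> Q (wl N H t x)}"
proof -
  have "image_mset (wl N G t) (mset_set {0..<N}) = image_mset (wl N H t) (mset_set {0..<N})"
    using assms unfolding wl_equiv_def by blast
  then have "size (filter_mset Q (image_mset (wl N G t) (mset_set {0..<N}))) =
             size (filter_mset Q (image_mset (wl N H t) (mset_set {0..<N})))" by simp
  then show ?thesis by (simp add: count_filter_card atLeast0LessThan lessThan_def)
qed



lemma wl_relabel:
  assumes bij: "bij_betw \<sigma> {0..<N} {0..<N}"
    and EL: "\<And>a b. a < N \<Longrightarrow> b < N \<Longrightarrow> E (\<sigma> a) (\<sigma> b) = L a b"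
  shows "a < N \<Longrightarrow> wl N E t (\<sigma> a) = wl N L t a"
proof (induction t arbitrary: a)
  case 0 then show ?case by simp
next
  case (Suc t)
  have inj: "inj_on \<sigma> {b. b < N \<and> L a b}"
    using bij unfolding bij_betw_def by (auto intro: inj_on_subset)
  have img: "{w. w < N \<and> E (\<sigma> a) w} = \<sigma> ` {b. b < N \<and> L a b}"
  proof
    show "{w. w < N \<and> E (\<sigma> a) w} \<subseteq> \<sigma> ` {b. b < N \<and> L a b}"
    proof
      fix w assume w: "w \<in> {w. w < N \<and> E (\<sigma> a) w}"
      then have "w \<in> \<sigma> ` {0..<N}" using bij unfolding bij_betw_def by auto
      then obtain b where b: "b < N" "w = \<sigma> b" by auto
      then show "w \<in> \<sigma> ` {b. b < N \<and> L a b}" using w EL[OF Suc.prems b(1)] by auto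
    qed
  next
    show "\<sigma> ` {b. b < N \<and> L a b} \<subseteq> {w. w < N \<and> E (\<sigma> a) w}"
      using bij EL[OF Suc.prems] unfolding bij_betw_def by auto
  qed
  have "image_mset (wl N E t) (mset_set {w. w < N \<and> E (\<sigma> a) w})
      = image_mset (wl N E t) (image_mset \<sigma> (mset_set {b. b < N \<and> L a b}))"
    by (simp add: img image_mset_mset_set[OF inj])
  also have "\<dots> = image_mset (wl N L t) (mset_set {b. b < N \<and> L a b})"
    by (simp add: multiset.map_comp o_def, rule image_mset_cong, simp add: Suc.IH)
  finally show ?case using Suc by simp
qed

lemma wl_equiv_relabel:
  assumes bij: "bij_betw \<sigma> {0..<N} {0..<N}"
    and EL: "\<And>a b. a < N \<Longrightarrow> b < N \<Longrightarrow> E (\<sigma> a) (\<sigma> b) = L a b"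
    and EL': "\<And>a b. a < N \<Longrightarrow> b < N \<Longrightarrow> E' (\<sigma> a) (\<sigma> b) = L' a b"
  shows "wl_equiv N E E' \<longleftrightarrow> wl_equiv N L L'"
proof -
  have inj: "inj_on \<sigma> {0..<N}" and im: "\<sigma> ` {0..<N} = {0..<N}"
    using bij unfolding bij_betw_def by auto
  have ms: "mset_set {0..<N} = image_mset \<sigma> (mset_set {0..<N})"
    using image_mset_mset_set[OF inj] im by simp
  have "image_mset (wl N E t) (mset_set {0..<N}) = image_mset (wl N L t) (mset_set {0..<N})" for t
  proof -
    have "image_mset (wl N E t) (mset_set {0..<N}) = image_mset (\<lambda>a. wl N E t (\<sigma> a)) (mset_set {0..<N})"
      by (subst ms) (simp add: multiset.map_comp o_def)
    also have "\<dots> = image_mset (wl N L t) (mset_set {0..<N})"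
      by (rule image_mset_cong, rule wl_relabel[of \<sigma> N E L], rule bij, rule EL, auto)
    finally show ?thesis .
  qed
  moreover have "image_mset (wl N E' t) (mset_set {0..<N}) = image_mset (wl N L' t) (mset_set {0..<N})" for t
  proof -
    have "image_mset (wl N E' t) (mset_set {0..<N}) = image_mset (\<lambda>a. wl N E' t (\<sigma> a)) (mset_set {0..<N})"
      by (subst ms) (simp add: multiset.map_comp o_def)
    also have "\<dots> = image_mset (wl N L' t) (mset_set {0..<N})"
      by (rule image_mset_cong, rule wl_relabel[of \<sigma> N E' L'], rule bij, rule EL', auto)
    finally show ?thesis .
  qed
  ultimately show ?thesis unfolding wl_equiv_def by simp
qed



fun wpre :: "wl_color \<Rightarrow> wl_color" where
  "wpre WL_Init = WL_Init"
| "wpre (WL_Step c M) = c"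

lemma wpre_wl: "wpre (wl N E (Suc t) x) = wl N E t x" by simp

lemma sum_ind: "finite A \<Longrightarrow> (\<Sum>k\<in>A. if P k then r else 0) = of_nat (card {k\<in>A. P k}) * (r::real)"
  by (simp add: sum.inter_filter[symmetric])

lemma sum_indn: "finite A \<Longrightarrow> (\<Sum>k\<in>A. if P k then 1 else 0) = (card {k\<in>A. P k} :: nat)"
  by (simp add: sum.inter_filter[symmetric])

lemma wl_stable_exists:
  "\<exists>t. \<forall>x<N. \<forall>y<N. wl N E t x = wl N E t y \<longrightarrow> wl N E (Suc t) x = wl N E (Suc t) y"
proof -
  define img where "img t = wl N E t ` {0..<N}" for t
  have pre: "img t = wpre ` img (Suc t)" for t
    unfolding img_def image_image by simp
  have le: "card (img t) \<le> card (img (Suc t))" for t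
    using pre card_image_le[of "img (Suc t)" wpre] unfolding img_def by auto
  have leN: "card (img t) \<le> N" for t
    unfolding img_def using card_image_le[of "{0..<N}" "wl N E t"] by simp
  have "\<exists>t. card (img (Suc t)) \<le> card (img t)"
  proof (rule ccontr)
    assume "\<not> ?thesis"
    then have lt: "card (img t) < card (img (Suc t))" for t by (simp add: not_le)
    have "t \<le> card (img t)" for t
      by (induction t) (auto intro: Suc_leI le_less_trans lt)
    then show False using leN[of "Suc N"] by (meson not_less_eq_eq)
  qed
  then obtain t where t: "card (img (Suc t)) \<le> card (img t)" by blast
  have "card (wpre ` img (Suc t)) = card (img (Suc t))"
    using t le[of t] pre[of t] by simp
  then have inj: "inj_on wpre (img (Suc t))"
    by (rule eq_card_imp_inj_on[rotated]) (simp add: img_def)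
  show ?thesis
  proof (intro exI allI impI)
    fix x y assume xy: "x < N" "y < N" "wl N E t x = wl N E t y"
    have "wpre (wl N E (Suc t) x) = wpre (wl N E (Suc t) y)" using xy by simp
    moreover have "wl N E (Suc t) x \<in> img (Suc t)" "wl N E (Suc t) y \<in> img (Suc t)"
      using xy unfolding img_def by (auto simp del: wl.simps)
    ultimately show "wl N E (Suc t) x = wl N E (Suc t) y" using inj by (meson inj_onD)
  qed
qed

lemma nbr_card_eq:
  assumes "wl N E (Suc t) x = wl N E' (Suc t) y"
  shows "card {k. k < N \<and> E x k \<and> wl N E t k = a} = card {k. k < N \<and> E' y k \<and> wl N E' t k = a}"
proof -
  have "image_mset (wl N E t) (mset_set {w. w < N \<and> E x w}) =
        image_mset (wl N E' t) (mset_set {w. w < N \<and> E' y w})"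
    using assms by simp
  then have "size (filter_mset (\<lambda>c. c = a) (image_mset (wl N E t) (mset_set {w. w < N \<and> E x w}))) =
        size (filter_mset (\<lambda>c. c = a) (image_mset (wl N E' t) (mset_set {w. w < N \<and> E' y w})))"
    by simp
  then show ?thesis by (simp add: count_filter_card conj_assoc)
qed

theorem tinhofer:
  assumes symE: "\<And>x y. E x y = E y x" and symE': "\<And>x y. E' x y = E' y x"
    and eqv: "wl_equiv N E E'"
  shows "\<exists>S. doubly_stochastic N S \<and>
     (\<forall>i<N. \<forall>j<N. (\<Sum>k<N. adj E i k * S k j) = (\<Sum>k<N. S i k * adj E' k j))"
proof -
  obtain t where st: "\<And>x y. x < N \<Longrightarrow> y < N \<Longrightarrow> wl N E t x = wl N E t y \<Longrightarrow> wl N E (Suc t) x = wl N E (Suc t) y"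
    using wl_stable_exists[of N E] by blast
  define c where "c = wl N E t"
  define c' where "c' = wl N E' t"
  define m where "m a = card {z. z < N \<and> c z = a}" for a
  have mm: "card {z. z < N \<and> c' z = a} = m a" for a
    unfolding m_def c_def c'_def using wl_equiv_count[OF eqv, of "\<lambda>x. x = a" t] by simp
  have imgs: "wl N E s ` {0..<N} = wl N E' s ` {0..<N}" for s
  proof -
    have "image_mset (wl N E s) (mset_set {0..<N}) = image_mset (wl N E' s) (mset_set {0..<N})"
      using eqv unfolding wl_equiv_def by blast
    then have "set_mset (image_mset (wl N E s) (mset_set {0..<N})) = set_mset (image_mset (wl N E' s) (mset_set {0..<N}))"
      by simp
    then show ?thesis by simp
  qed
  have ex: "\<exists>z<N. wl N E s z = wl N E' s y" if "y < N" for y s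
  proof -
    have "wl N E' s y \<in> wl N E s ` {0..<N}" using imgs[of s] that by auto
    then show ?thesis by auto
  qed
  have mpos: "m (c x) > 0" if "x < N" for x
  proof -
    have "x \<in> {z. z < N \<and> c z = c x}" using that by simp
    then show ?thesis unfolding m_def by (subst card_gt_0_iff) auto
  qed
  have mpos': "m (c' y) > 0" if y: "y < N" for y
  proof -
    obtain z where "z < N" "wl N E t z = wl N E' t y" using ex[OF y] by blast
    then show ?thesis using mpos[of z] by (simp add: c_def c'_def)
  qed
  define S where "S x y = (if c x = c' y then 1 / real (m (c x)) else 0)" for x y
  have ds: "doubly_stochastic N S"
    unfolding doubly_stochastic_def
  proof (intro conjI allI impI)
    fix i j assume "i < N" "j < N" then show "0 \<le> S i j" by (simp add: S_def)
  next
    fix i assume i: "i < N"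
    have "(\<Sum>j<N. S i j) = real (card {j\<in>{..<N}. c' j = c i}) * (1 / real (m (c i)))"
      unfolding S_def by (subst sum_ind[symmetric]) (auto intro: sum.cong)
    also have "{j\<in>{..<N}. c' j = c i} = {z. z < N \<and> c' z = c i}" by auto
    finally show "(\<Sum>j<N. S i j) = 1" using mm mpos[OF i] by simp
  next
    fix j assume j: "j < N"
    have "(\<Sum>i<N. S i j) = (\<Sum>i<N. if c i = c' j then 1 / real (m (c' j)) else 0)"
      unfolding S_def by (rule sum.cong) auto
    also have "\<dots> = real (card {i\<in>{..<N}. c i = c' j}) * (1 / real (m (c' j)))"
      by (rule sum_ind) simp
    also have "{i\<in>{..<N}. c i = c' j} = {z. z < N \<and> c z = c' j}" by auto
    moreover have "\<exists>x<N. c x = c' j" using ex[OF j, of t] by (simp add: c_def c'_def)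
    ultimately show "(\<Sum>i<N. S i j) = 1" using mpos'[OF j] unfolding m_def by simp
  qed
  have comm: "(\<Sum>k<N. adj E i k * S k j) = (\<Sum>k<N. S i k * adj E' k j)" if i: "i < N" and j: "j < N" for i j
  proof -
    define a where "a = c i"
    define b where "b = c' j"
    define \<alpha> where "\<alpha> = card {k. k < N \<and> E i k \<and> c k = b}"
    define \<beta> where "\<beta> = card {k. k < N \<and> E' j k \<and> c' k = a}"
    have L: "(\<Sum>k<N. adj E i k * S k j) = real \<alpha> * (1 / real (m b))"
    proof -
      have "(\<Sum>k<N. adj E i k * S k j) = (\<Sum>k<N. if E i k \<and> c k = b then 1 / real (m b) else 0)"
        unfolding S_def adj_def b_def by (rule sum.cong) auto
      also have "\<dots> = real (card {k\<in>{..<N}. E i k \<and> c k = b}) * (1 / real (m b))"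
        by (rule sum_ind) simp
      also have "{k\<in>{..<N}. E i k \<and> c k = b} = {k. k < N \<and> E i k \<and> c k = b}" by auto
      finally show ?thesis unfolding \<alpha>_def .
    qed
    have R: "(\<Sum>k<N. S i k * adj E' k j) = real \<beta> * (1 / real (m a))"
    proof -
      have "(\<Sum>k<N. S i k * adj E' k j) = (\<Sum>k<N. if E' j k \<and> c' k = a then 1 / real (m a) else 0)"
        unfolding S_def adj_def a_def
        apply (intro sum.cong refl)
        subgoal for k using symE'[of k j] by auto
        done
      also have "\<dots> = real (card {k\<in>{..<N}. E' j k \<and> c' k = a}) * (1 / real (m a))"
        by (rule sum_ind) simp
      also have "{k\<in>{..<N}. E' j k \<and> c' k = a} = {k. k < N \<and> E' j k \<and> c' k = a}" by auto
      finally show ?thesis unfolding \<beta>_def .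
    qed
    obtain z where z: "z < N" "wl N E (Suc t) z = wl N E' (Suc t) j" using ex[OF j] by blast
    have czb: "c z = b" using arg_cong[OF z(2), of wpre] by (simp add: c_def b_def c'_def)
    have \<beta>z: "\<beta> = card {k. k < N \<and> E z k \<and> c k = a}"
      unfolding \<beta>_def c_def c'_def using nbr_card_eq[OF z(2)] by simp
    have \<alpha>x: "card {k. k < N \<and> E x k \<and> c k = b} = \<alpha>" if "x < N" "c x = a" for x
    proof -
      have "wl N E (Suc t) x = wl N E (Suc t) i" using st[OF that(1) i] that by (simp add: c_def a_def)
      then show ?thesis unfolding \<alpha>_def c_def using nbr_card_eq by blast
    qed
    have \<beta>x: "card {k. k < N \<and> E x k \<and> c k = a} = \<beta>" if "x < N" "c x = b" for x
    proof -
      have "wl N E (Suc t) x = wl N E (Suc t) z" using st[OF that(1) z(1)] that czb by (simp add: c_def)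
      then show ?thesis unfolding \<beta>z c_def using nbr_card_eq by blast
    qed
    define D where "D a b = (\<Sum>x<N. \<Sum>k<N. if c x = a \<and> c k = b \<and> E x k then 1 else 0 :: nat)" for a b
    have Dsym: "D a b = D b a"
      unfolding D_def by (subst sum.swap) (intro sum.cong refl, smt (verit) symE)
    have Dab: "D a b = m a * \<alpha>"
    proof -
      have "D a b = (\<Sum>x<N. if c x = a then card {k\<in>{..<N}. E x k \<and> c k = b} else 0)"
        unfolding D_def
      proof (intro sum.cong refl)
        fix x
        show "(\<Sum>k<N. if c x = a \<and> c k = b \<and> E x k then 1 else 0) = (if c x = a then card {k\<in>{..<N}. E x k \<and> c k = b} else 0)"
        proof (cases "c x = a")
          case True
          then have "(\<Sum>k<N. if c x = a \<and> c k = b \<and> E x k then 1 else 0) = (\<Sum>k<N. if E x k \<and> c k = b then 1 else 0)"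
            by (intro sum.cong) auto
          also have "\<dots> = card {k\<in>{..<N}. E x k \<and> c k = b}" by (rule sum_indn) simp
          finally show ?thesis using True by simp
        qed simp
      qed
      also have "\<dots> = (\<Sum>x<N. if c x = a then \<alpha> else 0)"
      proof (intro sum.cong refl)
        fix x assume "x \<in> {..<N}"
        then show "(if c x = a then card {k\<in>{..<N}. E x k \<and> c k = b} else 0) = (if c x = a then \<alpha> else 0)"
          using \<alpha>x[of x] by (auto simp: conj_commute intro: arg_cong[where f=card])
      qed
      also have "\<dots> = card {x\<in>{..<N}. c x = a} * \<alpha>"
        by (simp add: sum.inter_filter[symmetric])
      finally show ?thesis unfolding m_def by (simp add: lessThan_def conj_commute)
    qed
    have Dba: "D b a = m b * \<beta>"
    proof -
      have "D b a = (\<Sum>x<N. if c x = b then card {k\<in>{..<N}. E x k \<and> c k = a} else 0)"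
        unfolding D_def
      proof (intro sum.cong refl)
        fix x
        show "(\<Sum>k<N. if c x = b \<and> c k = a \<and> E x k then 1 else 0) = (if c x = b then card {k\<in>{..<N}. E x k \<and> c k = a} else 0)"
        proof (cases "c x = b")
          case True
          then have "(\<Sum>k<N. if c x = b \<and> c k = a \<and> E x k then 1 else 0) = (\<Sum>k<N. if E x k \<and> c k = a then 1 else 0)"
            by (intro sum.cong) auto
          also have "\<dots> = card {k\<in>{..<N}. E x k \<and> c k = a}" by (rule sum_indn) simp
          finally show ?thesis using True by simp
        qed simp
      qed
      also have "\<dots> = (\<Sum>x<N. if c x = b then \<beta> else 0)"
      proof (intro sum.cong refl)
        fix x assume "x \<in> {..<N}"
        then show "(if c x = b then card {k\<in>{..<N}. E x k \<and> c k = a} else 0) = (if c x = b then \<beta> else 0)"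
          using \<beta>x[of x] by (auto simp: conj_commute intro: arg_cong[where f=card])
      qed
      also have "\<dots> = card {x\<in>{..<N}. c x = b} * \<beta>"
        by (simp add: sum.inter_filter[symmetric])
      finally show ?thesis unfolding m_def by (simp add: lessThan_def conj_commute)
    qed
    have "m a * \<alpha> = m b * \<beta>" using Dsym Dab Dba by simp
    then have key: "real (m a) * real \<alpha> = real (m b) * real \<beta>"
      by (simp only: of_nat_mult[symmetric])
    have pa: "m a > 0" using mpos[OF i] a_def by simp
    have pb: "m b > 0" using mpos'[OF j] b_def by simp
    show ?thesis unfolding L R using key pa pb by (simp add: field_simps)
  qed
  show ?thesis using ds comm by blast
qed



lemma cut_set_finite:
  fixes N :: nat and M :: "nat \<Rightarrow> nat \<Rightarrow> real"
  shows "finite {\<bar>\<Sum>i\<in>S. \<Sum>j\<in>T. M i j\<bar> | S T. S \<subseteq> {0..<N} \<and> T \<subseteq> {0..<N}}"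
proof -
  have "finite {S. S \<subseteq> {0..<N}}" by (simp add: Pow_def[symmetric])
  then show ?thesis by (rule finite_image_set2) fact
qed

lemma cut_norm_ge: "S \<subseteq> {0..<N} \<Longrightarrow> T \<subseteq> {0..<N} \<Longrightarrow> \<bar>\<Sum>i\<in>S. \<Sum>j\<in>T. M i j\<bar> \<le> cut_norm N M"
  unfolding cut_norm_def by (rule Max_ge[OF cut_set_finite]) blast

lemma cut_norm_nonneg: "0 \<le> cut_norm N M"
  using cut_norm_ge[of "{}" N "{}" M] by simp

lemma cut_norm_le:
  assumes "\<And>S T. S \<subseteq> {0..<N} \<Longrightarrow> T \<subseteq> {0..<N} \<Longrightarrow> \<bar>\<Sum>i\<in>S. \<Sum>j\<in>T. M i j\<bar> \<le> b"
  shows "cut_norm N M \<le> b"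
  unfolding cut_norm_def
proof (subst Max_le_iff[OF cut_set_finite])
  show "{\<bar>\<Sum>i\<in>S. \<Sum>j\<in>T. M i j\<bar> | S T. S \<subseteq> {0..<N} \<and> T \<subseteq> {0..<N}} \<noteq> {}" by blast
  show "\<forall>a\<in>{\<bar>\<Sum>i\<in>S. \<Sum>j\<in>T. M i j\<bar> | S T. S \<subseteq> {0..<N} \<and> T \<subseteq> {0..<N}}. a \<le> b"
    using assms by blast
qed

lemma tree_dist_le:
  assumes "doubly_stochastic N S"
  shows "tree_dist N G H \<le> cut_norm N (\<lambda>i j. (\<Sum>k<N. adj G i k * S k j) - (\<Sum>k<N. S i k * adj H k j))"
  unfolding tree_dist_def
proof (rule cInf_lower)
  show "cut_norm N (\<lambda>i j. (\<Sum>k<N. adj G i k * S k j) - (\<Sum>k<N. S i k * adj H k j))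
    \<in> (\<lambda>S. cut_norm N (\<lambda>i j. (\<Sum>k<N. adj G i k * S k j) - (\<Sum>k<N. S i k * adj H k j))) ` {S. doubly_stochastic N S}"
    using assms by blast
  show "bdd_below ((\<lambda>S. cut_norm N (\<lambda>i j. (\<Sum>k<N. adj G i k * S k j) - (\<Sum>k<N. S i k * adj H k j))) ` {S. doubly_stochastic N S})"
    by (rule bdd_belowI[where m=0]) (auto intro: cut_norm_nonneg)
qed

lemma aux1:
  fixes X :: "nat \<Rightarrow> nat \<Rightarrow> real"
  assumes X: "\<And>i k. 0 \<le> X i k" and tot: "(\<Sum>i<N. \<Sum>k<N. X i k) \<le> B"
    and W: "\<And>k. k < N \<Longrightarrow> 0 \<le> W k \<and> W k \<le> 1" and I: "I \<subseteq> {0..<N}"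
  shows "0 \<le> (\<Sum>i\<in>I. \<Sum>k<N. X i k * W k) \<and> (\<Sum>i\<in>I. \<Sum>k<N. X i k * W k) \<le> B"
proof
  show "0 \<le> (\<Sum>i\<in>I. \<Sum>k<N. X i k * W k)"
    using X W by (intro sum_nonneg) auto
  have "(\<Sum>i\<in>I. \<Sum>k<N. X i k * W k) \<le> (\<Sum>i\<in>I. \<Sum>k<N. X i k)"
    using X W by (intro sum_mono) (auto intro: mult_left_le)
  also have "\<dots> \<le> (\<Sum>i<N. \<Sum>k<N. X i k)"
    using I X by (intro sum_mono2) (auto intro: sum_nonneg)
  finally show "(\<Sum>i\<in>I. \<Sum>k<N. X i k * W k) \<le> B" using tot by simp
qed

lemma ds_row: "doubly_stochastic N S \<Longrightarrow> J \<subseteq> {0..<N} \<Longrightarrow> k < N \<Longrightarrow> 0 \<le> (\<Sum>j\<in>J. S k j) \<and> (\<Sum>j\<in>J. S k j) \<le> 1"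
proof -
  assume ds: "doubly_stochastic N S" and J: "J \<subseteq> {0..<N}" and k: "k < N"
  have nn: "\<And>j. j \<in> {..<N} \<Longrightarrow> 0 \<le> S k j" using ds k unfolding doubly_stochastic_def by auto
  have "(\<Sum>j\<in>J. S k j) \<le> (\<Sum>j<N. S k j)" using J nn by (intro sum_mono2) auto
  moreover have "0 \<le> (\<Sum>j\<in>J. S k j)" using J nn by (intro sum_nonneg) auto
  ultimately show ?thesis using ds k J nn unfolding doubly_stochastic_def by (auto intro: sum_nonneg)
qed

lemma ds_col: "doubly_stochastic N S \<Longrightarrow> I \<subseteq> {0..<N} \<Longrightarrow> k < N \<Longrightarrow> 0 \<le> (\<Sum>i\<in>I. S i k) \<and> (\<Sum>i\<in>I. S i k) \<le> 1"
proof -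
  assume ds: "doubly_stochastic N S" and J: "I \<subseteq> {0..<N}" and k: "k < N"
  have nn: "\<And>j. j \<in> {..<N} \<Longrightarrow> 0 \<le> S j k" using ds k unfolding doubly_stochastic_def by auto
  have "(\<Sum>j\<in>I. S j k) \<le> (\<Sum>j<N. S j k)" using J nn by (intro sum_mono2) auto
  moreover have "0 \<le> (\<Sum>j\<in>I. S j k)" using J nn by (intro sum_nonneg) auto
  ultimately show ?thesis using ds k J nn unfolding doubly_stochastic_def by (auto intro: sum_nonneg)
qed

lemma bnd_right:
  fixes X Y :: "nat \<Rightarrow> nat \<Rightarrow> real"
  assumes X: "\<And>i k. 0 \<le> X i k" "(\<Sum>i<N. \<Sum>k<N. X i k) \<le> 2"
    and Y: "\<And>i k. 0 \<le> Y i k" "(\<Sum>i<N. \<Sum>k<N. Y i k) \<le> 2"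
    and ds: "doubly_stochastic N S" and I: "I \<subseteq> {0..<N}" and J: "J \<subseteq> {0..<N}"
  shows "\<bar>\<Sum>i\<in>I. \<Sum>j\<in>J. \<Sum>k<N. (X i k - Y i k) * S k j\<bar> \<le> 2"
proof -
  define W where "W k = (\<Sum>j\<in>J. S k j)" for k
  have W: "\<And>k. k < N \<Longrightarrow> 0 \<le> W k \<and> W k \<le> 1" unfolding W_def using ds_row[OF ds J] by blast
  have eq: "(\<Sum>i\<in>I. \<Sum>j\<in>J. \<Sum>k<N. (X i k - Y i k) * S k j) =
        (\<Sum>i\<in>I. \<Sum>k<N. X i k * W k) - (\<Sum>i\<in>I. \<Sum>k<N. Y i k * W k)"
  proof -
    have "(\<Sum>j\<in>J. \<Sum>k<N. (X i k - Y i k) * S k j) = (\<Sum>k<N. X i k * W k) - (\<Sum>k<N. Y i k * W k)" for i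
    proof -
      have "(\<Sum>j\<in>J. \<Sum>k<N. (X i k - Y i k) * S k j) = (\<Sum>k<N. \<Sum>j\<in>J. (X i k - Y i k) * S k j)"
        by (rule sum.swap)
      also have "\<dots> = (\<Sum>k<N. (X i k - Y i k) * W k)" unfolding W_def by (simp add: sum_distrib_left)
      finally show ?thesis by (simp add: left_diff_distrib sum_subtractf)
    qed
    then show ?thesis by (simp add: sum_subtractf)
  qed
  show ?thesis unfolding eq using aux1[of X N 2 W I, OF X W I] aux1[of Y N 2 W I, OF Y W I] by linarith
qed

lemma bnd_left:
  fixes X Y :: "nat \<Rightarrow> nat \<Rightarrow> real"
  assumes X: "\<And>i k. 0 \<le> X i k" "(\<Sum>i<N. \<Sum>k<N. X i k) \<le> 2"
    and Y: "\<And>i k. 0 \<le> Y i k" "(\<Sum>i<N. \<Sum>k<N. Y i k) \<le> 2"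
    and ds: "doubly_stochastic N S" and I: "I \<subseteq> {0..<N}" and J: "J \<subseteq> {0..<N}"
  shows "\<bar>\<Sum>i\<in>I. \<Sum>j\<in>J. \<Sum>k<N. S i k * (X k j - Y k j)\<bar> \<le> 2"
proof -
  define W where "W k = (\<Sum>i\<in>I. S i k)" for k
  have W: "\<And>k. k < N \<Longrightarrow> 0 \<le> W k \<and> W k \<le> 1" unfolding W_def using ds_col[OF ds I] by blast
  define X' where "X' j k = X k j" for j k
  define Y' where "Y' j k = Y k j" for j k
  have X': "\<And>i k. 0 \<le> X' i k" "(\<Sum>i<N. \<Sum>k<N. X' i k) \<le> 2"
    using X unfolding X'_def by (auto simp: sum.swap[of "\<lambda>i k. X k i"])
  have Y': "\<And>i k. 0 \<le> Y' i k" "(\<Sum>i<N. \<Sum>k<N. Y' i k) \<le> 2"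
    using Y unfolding Y'_def by (auto simp: sum.swap[of "\<lambda>i k. Y k i"])
  have eq: "(\<Sum>i\<in>I. \<Sum>j\<in>J. \<Sum>k<N. S i k * (X k j - Y k j)) =
        (\<Sum>j\<in>J. \<Sum>k<N. X' j k * W k) - (\<Sum>j\<in>J. \<Sum>k<N. Y' j k * W k)"
  proof -
    have "(\<Sum>i\<in>I. \<Sum>j\<in>J. \<Sum>k<N. S i k * (X k j - Y k j)) = (\<Sum>j\<in>J. \<Sum>i\<in>I. \<Sum>k<N. S i k * (X k j - Y k j))"
      by (rule sum.swap)
    also have "\<dots> = (\<Sum>j\<in>J. \<Sum>k<N. \<Sum>i\<in>I. S i k * (X k j - Y k j))"
      by (rule sum.cong[OF refl], rule sum.swap)
    also have "\<dots> = (\<Sum>j\<in>J. \<Sum>k<N. (X' j k - Y' j k) * W k)"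
      unfolding W_def X'_def Y'_def by (simp add: sum_distrib_right mult.commute)
    finally show ?thesis by (simp add: left_diff_distrib sum_subtractf)
  qed
  show ?thesis unfolding eq using aux1[of X' N 2 W J, OF X' W J] aux1[of Y' N 2 W J, OF Y' W J] by linarith
qed

lemma sum_pair_ind:
  fixes N :: nat
  shows "(\<Sum>i<N. \<Sum>k<N. if P i k then 1 else 0) = real (card {(i, k). i < N \<and> k < N \<and> P i k})"
proof -
  have "(\<Sum>i<N. \<Sum>k<N. if P i k then 1 else (0::real)) = (\<Sum>z\<in>{..<N} \<times> {..<N}. if P (fst z) (snd z) then 1 else 0)"
    by (simp add: sum.cartesian_product split_beta)
  also have "\<dots> = real (card {z\<in>{..<N} \<times> {..<N}. P (fst z) (snd z)}) * 1"
    by (rule sum_ind) simp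
  also have "{z\<in>{..<N} \<times> {..<N}. P (fst z) (snd z)} = {(i, k). i < N \<and> k < N \<and> P i k}" by auto
  finally show ?thesis by simp
qed

lemma chain:
  assumes s1: "\<And>x y. G1 x y = G1 y x" and s2: "\<And>x y. G2 x y = G2 y x"
    and eqv: "wl_equiv N G1 G2"
    and c1: "card {(i, k). i < N \<and> k < N \<and> p i k \<and> \<not> G1 i k} \<le> 2"
    and c2: "card {(i, k). i < N \<and> k < N \<and> G1 i k \<and> \<not> p i k} \<le> 2"
    and c3: "card {(i, k). i < N \<and> k < N \<and> G2 i k \<and> \<not> q i k} \<le> 2"
    and c4: "card {(i, k). i < N \<and> k < N \<and> q i k \<and> \<not> G2 i k} \<le> 2"
  shows "tree_dist N p q \<le> 4"
proof -
  obtain S where ds: "doubly_stochastic N S"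
    and cm: "\<And>i j. i < N \<Longrightarrow> j < N \<Longrightarrow> (\<Sum>k<N. adj G1 i k * S k j) = (\<Sum>k<N. S i k * adj G2 k j)"
    using tinhofer[OF s1 s2 eqv] by blast
  define X1 where "X1 i k = (if p i k \<and> \<not> G1 i k then 1 else 0 :: real)" for i k
  define Y1 where "Y1 i k = (if G1 i k \<and> \<not> p i k then 1 else 0 :: real)" for i k
  define X2 where "X2 i k = (if G2 i k \<and> \<not> q i k then 1 else 0 :: real)" for i k
  define Y2 where "Y2 i k = (if q i k \<and> \<not> G2 i k then 1 else 0 :: real)" for i k
  have ap: "adj p i k = adj G1 i k + (X1 i k - Y1 i k)" for i k
    unfolding adj_def X1_def Y1_def by auto
  have aq: "adj q i k = adj G2 i k - (X2 i k - Y2 i k)" for i k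
    unfolding adj_def X2_def Y2_def by auto
  have X1: "\<And>i k. 0 \<le> X1 i k" "(\<Sum>i<N. \<Sum>k<N. X1 i k) \<le> 2"
    using c1 unfolding X1_def sum_pair_ind by auto
  have Y1: "\<And>i k. 0 \<le> Y1 i k" "(\<Sum>i<N. \<Sum>k<N. Y1 i k) \<le> 2"
    using c2 unfolding Y1_def sum_pair_ind by auto
  have X2: "\<And>i k. 0 \<le> X2 i k" "(\<Sum>i<N. \<Sum>k<N. X2 i k) \<le> 2"
    using c3 unfolding X2_def sum_pair_ind by auto
  have Y2: "\<And>i k. 0 \<le> Y2 i k" "(\<Sum>i<N. \<Sum>k<N. Y2 i k) \<le> 2"
    using c4 unfolding Y2_def sum_pair_ind by auto
  have "cut_norm N (\<lambda>i j. (\<Sum>k<N. adj p i k * S k j) - (\<Sum>k<N. S i k * adj q k j)) \<le> 4"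
  proof (rule cut_norm_le)
    fix I J assume I: "I \<subseteq> {0..<N}" and J: "J \<subseteq> {0..<N}"
    have "(\<Sum>i\<in>I. \<Sum>j\<in>J. (\<Sum>k<N. adj p i k * S k j) - (\<Sum>k<N. S i k * adj q k j)) =
          (\<Sum>i\<in>I. \<Sum>j\<in>J. \<Sum>k<N. (X1 i k - Y1 i k) * S k j) + (\<Sum>i\<in>I. \<Sum>j\<in>J. \<Sum>k<N. S i k * (X2 k j - Y2 k j))"
    proof -
      have "(\<Sum>k<N. adj p i k * S k j) - (\<Sum>k<N. S i k * adj q k j) =
            (\<Sum>k<N. (X1 i k - Y1 i k) * S k j) + (\<Sum>k<N. S i k * (X2 k j - Y2 k j))"
        if "i \<in> I" "j \<in> J" for i j
      proof -
        have ij: "i < N" "j < N" using that I J by auto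
        have "(\<Sum>k<N. adj p i k * S k j) = (\<Sum>k<N. adj G1 i k * S k j) + (\<Sum>k<N. (X1 i k - Y1 i k) * S k j)"
          unfolding ap by (simp add: distrib_right sum.distrib)
        moreover have "(\<Sum>k<N. S i k * adj q k j) = (\<Sum>k<N. S i k * adj G2 k j) - (\<Sum>k<N. S i k * (X2 k j - Y2 k j))"
          unfolding aq by (simp add: right_diff_distrib sum_subtractf)
        ultimately show ?thesis using cm[OF ij] by simp
      qed
      then show ?thesis by (simp add: sum.distrib)
    qed
    then show "\<bar>\<Sum>i\<in>I. \<Sum>j\<in>J. (\<Sum>k<N. adj p i k * S k j) - (\<Sum>k<N. S i k * adj q k j)\<bar> \<le> 4"
      using bnd_right[OF X1 Y1 ds I J] bnd_left[OF X2 Y2 ds I J] by linarith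
  qed
  then show ?thesis using tree_dist_le[OF ds, of p q] by linarith
qed



definition pe :: "nat \<Rightarrow> nat set \<Rightarrow> nat \<Rightarrow> nat \<Rightarrow> bool" where
  "pe n B a b \<longleftrightarrow> b = Suc a \<and> (Suc a < n \<or> (n \<le> a \<and> Suc a < 2*n \<and> a \<notin> B))"

definition Lay :: "nat \<Rightarrow> nat set \<Rightarrow> nat \<Rightarrow> nat \<Rightarrow> graph" where
  "Lay n B u v a b \<longleftrightarrow> pe n B a b \<or> pe n B b a \<or> (a = u \<and> b = v) \<or> (b = u \<and> a = v)"

definition Inn :: "nat \<Rightarrow> nat set \<Rightarrow> graph" where
  "Inn n B a b \<longleftrightarrow> n \<le> a \<and> n \<le> b \<and> (pe n B a b \<or> pe n B b a)"

lemma reach_edge_mono: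
  "reach E N s x y \<Longrightarrow> (\<And>a b. E a b \<Longrightarrow> E' a b) \<Longrightarrow> reach E' N s x y"
  by (induction s arbitrary: x) auto

context
  fixes n :: nat and B :: "nat set" and u :: nat
  assumes u: "n \<le> u" "u < 2*n"
begin

abbreviation "L j \<equiv> Lay n B u j"
abbreviation "NN \<equiv> 2*n"

lemma nbrs_low:
  assumes x: "x < n" and j: "j < n"
  shows "{w. w < NN \<and> L j x w} =
    (if Suc x < n then {Suc x} else {}) \<union> (if 0 < x then {x - 1} else {}) \<union> (if x = j then {u} else {})"
  using x j u unfolding Lay_def pe_def by (auto split: if_splits)

lemma deg_low:
  assumes x: "x < n" and j: "j < n"
  shows "deg (L j) NN x = (if Suc x < n then 1 else 0) + (if 0 < x then 1 else 0) + (if x = j then 1 else 0)"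
proof -
  have "deg (L j) NN x = card ((if Suc x < n then {Suc x} else {}) \<union> (if 0 < x then {x - 1} else {}) \<union> (if x = j then {u} else {}))"
    unfolding deg_def nbrs_low[OF x j] ..
  also have "\<dots> = card ((if Suc x < n then {Suc x} else {}) \<union> (if 0 < x then {x - 1} else {})) + card (if x = j then {u} else {})"
    using x u by (intro card_Un_disjoint) auto
  also have "card ((if Suc x < n then {Suc x} else {}) \<union> (if 0 < x then {x - 1} else {})) =
     card (if Suc x < n then {Suc x} else {}) + card (if 0 < x then {x - 1} else {})"
    by (intro card_Un_disjoint) auto
  finally show ?thesis by simp
qed

lemma nbrs_high:
  assumes x: "n \<le> x" and j: "j < n"
  shows "{w. w < NN \<and> L j x w} = {w. w < NN \<and> Inn n B x w} \<union> (if x = u then {j} else {})"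
  using x j u unfolding Lay_def Inn_def pe_def by (auto split: if_splits)

lemma deg_high:
  assumes x: "n \<le> x" and j: "j < n"
  shows "deg (L j) NN x = card {w. w < NN \<and> Inn n B x w} + (if x = u then 1 else 0)"
proof -
  have "deg (L j) NN x = card ({w. w < NN \<and> Inn n B x w} \<union> (if x = u then {j} else {}))"
    unfolding deg_def nbrs_high[OF x j] ..
  also have "\<dots> = card {w. w < NN \<and> Inn n B x w} + card (if x = u then {j} else {})"
    using x j by (intro card_Un_disjoint) (auto simp: Inn_def)
  finally show ?thesis by simp
qed

lemma R1: "x < n \<Longrightarrow> x + s < j \<Longrightarrow> j < n \<Longrightarrow> reach (L j) NN s x w \<Longrightarrow> w < n \<and> w \<le> x + s"
proof (induction s arbitrary: x)
  case 0 then show ?case by simp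
next
  case (Suc s)
  from Suc.prems(4) consider "reach (L j) NN s x w" | z where "z < NN" "L j x z" "reach (L j) NN s z w" by auto
  then show ?case
  proof cases
    case 1 then show ?thesis using Suc by fastforce
  next
    case 2
    have "z = Suc x \<and> Suc x < n \<or> Suc z = x" using 2(2) Suc.prems u unfolding Lay_def pe_def by auto
    then have "z < n" "z + s < j" "z \<le> Suc x" using Suc.prems by auto
    then show ?thesis using Suc.IH[of z] 2(3) Suc.prems by auto
  qed
qed

lemma R2: "x < n \<Longrightarrow> j + s < x \<Longrightarrow> reach (L j) NN s x w \<Longrightarrow> w < n \<and> x \<le> w + s"
proof (induction s arbitrary: x)
  case 0 then show ?case by simp
next
  case (Suc s)
  from Suc.prems(3) consider "reach (L j) NN s x w" | z where "z < NN" "L j x z" "reach (L j) NN s z w" by auto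
  then show ?case
  proof cases
    case 1 then show ?thesis using Suc by fastforce
  next
    case 2
    have "z = Suc x \<and> Suc x < n \<or> Suc z = x" using 2(2) Suc.prems u unfolding Lay_def pe_def by auto
    then have "z < n" "j + s < z" "x \<le> Suc z" using Suc.prems by auto
    then show ?thesis using Suc.IH[of z] 2(3) Suc.prems by auto
  qed
qed

lemma R3: "a + k < n \<Longrightarrow> reach (L j) NN k a (a + k)"
proof (induction k)
  case 0 then show ?case by simp
next
  case (Suc k)
  have "L j (a + k) (Suc (a + k))" using Suc.prems unfolding Lay_def pe_def by auto
  then show ?case using reach_snoc[OF Suc.IH] Suc.prems by auto
qed

lemma R4: "a + k < n \<Longrightarrow> reach (L j) NN k (a + k) a"
proof (induction k arbitrary: a)
  case 0 then show ?case by simp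
next
  case (Suc k)
  have "reach (L j) NN k (Suc a + k) (Suc a)" using Suc.IH[of "Suc a"] Suc.prems by auto
  moreover have "L j (Suc a) a" using Suc.prems unfolding Lay_def pe_def by auto
  ultimately show ?case using reach_snoc[of "L j" NN k "Suc a + k" "Suc a" a] Suc.prems by auto
qed

lemma walk_high:
  "n \<le> x \<Longrightarrow> j < n \<Longrightarrow> reach (L j) NN s x w \<Longrightarrow>
     (n \<le> w \<and> reach (Inn n B) NN s x w) \<or> (\<exists>s'<s. reach (Inn n B) NN s' x u)"
proof (induction s arbitrary: x)
  case 0 then show ?case by simp
next
  case (Suc s)
  from Suc.prems(3) consider "reach (L j) NN s x w" | z where "z < NN" "L j x z" "reach (L j) NN s z w" by auto
  then show ?case
  proof cases
    case 1
    then have "(n \<le> w \<and> reach (Inn n B) NN s x w) \<or> (\<exists>s'<s. reach (Inn n B) NN s' x u)"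
      using Suc by blast
    then show ?thesis by auto
  next
    case 2
    show ?thesis
    proof (cases "n \<le> z")
      case True
      have I: "Inn n B x z" using 2(2) True Suc.prems unfolding Lay_def Inn_def by auto
      have "(n \<le> w \<and> reach (Inn n B) NN s z w) \<or> (\<exists>s'<s. reach (Inn n B) NN s' z u)"
        using Suc.IH[OF True Suc.prems(2) 2(3)] .
      then show ?thesis
      proof
        assume "n \<le> w \<and> reach (Inn n B) NN s z w"
        then show ?thesis using I 2(1) by auto
      next
        assume "\<exists>s'<s. reach (Inn n B) NN s' z u"
        then obtain s' where "s' < s" "reach (Inn n B) NN s' z u" by blast
        then have "Suc s' < Suc s" "reach (Inn n B) NN (Suc s') x u" using I 2(1) by auto
        then show ?thesis by blast
      qed
    next
      case False
      then have "x = u" using 2(2) Suc.prems u unfolding Lay_def pe_def by auto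
      then show ?thesis by auto
    qed
  qed
qed

lemma near_high:
  assumes x: "n \<le> x" and j: "0 < j" "Suc j < n"
  shows "(\<exists>w<NN. reach (L j) NN s x w \<and> deg (L j) NN w = 3) \<longleftrightarrow>
     (\<exists>w<NN. n \<le> w \<and> reach (Inn n B) NN s x w \<and> card {y. y < NN \<and> Inn n B w y} + (if w = u then 1 else 0) = 3)
     \<or> (\<exists>s'<s. reach (Inn n B) NN s' x u)"
proof
  assume "\<exists>w<NN. reach (L j) NN s x w \<and> deg (L j) NN w = 3"
  then obtain w where w: "w < NN" "reach (L j) NN s x w" "deg (L j) NN w = 3" by blast
  from walk_high[OF x _ w(2)] j
  show "(\<exists>w<NN. n \<le> w \<and> reach (Inn n B) NN s x w \<and> card {y. y < NN \<and> Inn n B w y} + (if w = u then 1 else 0) = 3)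
     \<or> (\<exists>s'<s. reach (Inn n B) NN s' x u)"
    using w deg_high[of w j] j by auto
next
  have II: "\<And>a b. Inn n B a b \<Longrightarrow> L j a b" unfolding Inn_def Lay_def by auto
  have dj: "deg (L j) NN j = 3" using deg_low[of j j] j by simp
  assume "(\<exists>w<NN. n \<le> w \<and> reach (Inn n B) NN s x w \<and> card {y. y < NN \<and> Inn n B w y} + (if w = u then 1 else 0) = 3)
     \<or> (\<exists>s'<s. reach (Inn n B) NN s' x u)"
  then show "\<exists>w<NN. reach (L j) NN s x w \<and> deg (L j) NN w = 3"
  proof
    assume "\<exists>w<NN. n \<le> w \<and> reach (Inn n B) NN s x w \<and> card {y. y < NN \<and> Inn n B w y} + (if w = u then 1 else 0) = 3"
    then obtain w where "w < NN" "n \<le> w" "reach (Inn n B) NN s x w" "card {y. y < NN \<and> Inn n B w y} + (if w = u then 1 else 0) = 3"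
      by blast
    then show ?thesis using reach_edge_mono[OF _ II] deg_high[of w j] j by auto
  next
    assume "\<exists>s'<s. reach (Inn n B) NN s' x u"
    then obtain s' where s': "s' < s" "reach (Inn n B) NN s' x u" by blast
    have "reach (L j) NN s' x u" using reach_edge_mono[OF s'(2) II] .
    moreover have "L j u j" unfolding Lay_def by simp
    ultimately have "reach (L j) NN (Suc s') x j" using reach_snoc j by auto
    then have "reach (L j) NN s x j" using reach_mono s' by (metis Suc_leI)
    moreover have "j < NN" using j by simp
    ultimately show ?thesis using dj by blast
  qed
qed


lemma deg_low_three:
  assumes "x < n" "j < n"
  shows "deg (L j) NN x = 3 \<longleftrightarrow> x = j \<and> 0 < j \<and> Suc j < n"
  using deg_low[OF assms] assms by auto

lemma deg_low_one:
  assumes "x < n" "0 < j" "Suc j < n"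
  shows "deg (L j) NN x = 1 \<longleftrightarrow> x = 0 \<or> x = n - 1"
  using deg_low[OF assms(1), of j] assms by auto

lemma split_card:
  "card {x. x < NN \<and> P x} = card {x. x < n \<and> P x} + card {x. n \<le> x \<and> x < NN \<and> P x}"
proof -
  have "{x. x < NN \<and> P x} = {x. x < n \<and> P x} \<union> {x. n \<le> x \<and> x < NN \<and> P x}" by auto
  moreover have "card ({x. x < n \<and> P x} \<union> {x. n \<le> x \<and> x < NN \<and> P x}) = card {x. x < n \<and> P x} + card {x. n \<le> x \<and> x < NN \<and> P x}"
    by (rule card_Un_disjoint) auto
  ultimately show ?thesis by simp
qed

lemma distinct_a:
  assumes j: "0 < j" "Suc j < n"
  shows "\<not> wl_equiv NN (L 0) (L j)"
proof
  assume eq: "wl_equiv NN (L 0) (L j)"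
  have c: "card {x. x < NN \<and> cdeg (wl NN (L 0) (Suc 0) x) = 3} = card {x. x < NN \<and> cdeg (wl NN (L j) (Suc 0) x) = 3}"
    using wl_equiv_count[OF eq, where Q="\<lambda>c. cdeg c = 3" and t="Suc 0"] by simp
  have "{x. x < NN \<and> cdeg (wl NN (L k) (Suc 0) x) = 3} = {x. x < NN \<and> deg (L k) NN x = 3}" for k
    using cdeg_wl by metis
  then have c2: "card {x. x < NN \<and> deg (L 0) NN x = 3} = card {x. x < NN \<and> deg (L j) NN x = 3}"
    using c by simp
  have l0: "{x. x < n \<and> deg (L 0) NN x = 3} = {}" using deg_low_three j by auto
  have lj: "{x. x < n \<and> deg (L j) NN x = 3} = {j}" using deg_low_three j by auto
  have h: "{x. n \<le> x \<and> x < NN \<and> deg (L 0) NN x = 3} = {x. n \<le> x \<and> x < NN \<and> deg (L j) NN x = 3}"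
    using deg_high j by auto
  show False using c2 unfolding split_card[of "\<lambda>x. deg (L 0) NN x = 3"] split_card[of "\<lambda>x. deg (L j) NN x = 3"] l0 lj h
    by simp
qed

lemma distinct_b:
  assumes j: "0 < j" "j < j'" "2 * j' < n"
  shows "\<not> wl_equiv NN (L j) (L j')"
proof
  assume eq: "wl_equiv NN (L j) (L j')"
  define s where "s = n - 1 - j'"
  define \<Phi> where "\<Phi> k x \<longleftrightarrow> deg (L k) NN x = 1 \<and> \<not> (\<exists>w<NN. reach (L k) NN s x w \<and> deg (L k) NN w = 3)" for k x
  have c: "card {x. x < NN \<and> (\<lambda>c. cdeg c = 1 \<and> \<not> nearD 3 s c) (wl NN (L j) (Suc s) x)} =
           card {x. x < NN \<and> (\<lambda>c. cdeg c = 1 \<and> \<not> nearD 3 s c) (wl NN (L j') (Suc s) x)}"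
    using wl_equiv_count[OF eq, where Q="\<lambda>c. cdeg c = 1 \<and> \<not> nearD 3 s c" and t="Suc s"] by simp
  have "{x. x < NN \<and> (\<lambda>c. cdeg c = 1 \<and> \<not> nearD 3 s c) (wl NN (L k) (Suc s) x)} = {x. x < NN \<and> \<Phi> k x}" for k
    unfolding \<Phi>_def using cdeg_wl nearD_wl[of s "Suc s"] by auto
  then have c2: "card {x. x < NN \<and> \<Phi> j x} = card {x. x < NN \<and> \<Phi> j' x}" using c by simp
  have jj: "Suc j < n" "0 < j'" "Suc j' < n" using j by auto
  have hx: "\<Phi> j x \<longleftrightarrow> \<Phi> j' x" if x: "n \<le> x" for x
  proof -
    have "deg (L j) NN x = deg (L j') NN x" using deg_high[OF x, of j] deg_high[OF x, of j'] jj by simp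
    moreover have "(\<exists>w<NN. reach (L j) NN s x w \<and> deg (L j) NN w = 3) \<longleftrightarrow> (\<exists>w<NN. reach (L j') NN s x w \<and> deg (L j') NN w = 3)"
      using near_high[OF x j(1) jj(1), of s] near_high[OF x jj(2) jj(3), of s] by simp
    ultimately show ?thesis unfolding \<Phi>_def by simp
  qed
  then have h: "{x. n \<le> x \<and> x < NN \<and> \<Phi> j x} = {x. n \<le> x \<and> x < NN \<and> \<Phi> j' x}" by auto
  have dj: "deg (L j) NN j = 3" "deg (L j') NN j' = 3" using deg_low_three j jj by auto
  have l1: "{x. x < n \<and> \<Phi> j x} = {n - 1}"
  proof -
    have "\<not> \<Phi> j 0"
    proof -
      have "reach (L j) NN j 0 j" using R3[of 0 j j] jj by simp
      moreover have "j \<le> s" using j unfolding s_def by arith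
      ultimately have "reach (L j) NN s 0 j" using reach_mono by blast
      then show ?thesis unfolding \<Phi>_def using dj jj by auto
    qed
    moreover have "\<Phi> j (n - 1)"
    proof -
      have "\<not> (reach (L j) NN s (n - 1) w \<and> deg (L j) NN w = 3)" if "w < NN" for w
      proof
        assume a: "reach (L j) NN s (n - 1) w \<and> deg (L j) NN w = 3"
        have "w < n \<and> n - 1 \<le> w + s" using R2[of "n - 1" j s w] a j unfolding s_def by auto
        then show False using a deg_low_three[of w j] j unfolding s_def by auto
      qed
      then show ?thesis unfolding \<Phi>_def using deg_low_one[of "n - 1" j] j by auto
    qed
    moreover have "\<not> \<Phi> j x" if "x < n" "x \<noteq> 0" "x \<noteq> n - 1" for x
      unfolding \<Phi>_def using deg_low_one[of x j] that j jj by auto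
    ultimately show ?thesis using j by auto
  qed
  have l2: "{x. x < n \<and> \<Phi> j' x} = {}"
  proof -
    have "\<not> \<Phi> j' 0"
    proof -
      have "reach (L j') NN j' 0 j'" using R3[of 0 j' j'] jj by simp
      moreover have "j' \<le> s" using j unfolding s_def by arith
      ultimately have "reach (L j') NN s 0 j'" using reach_mono by blast
      then show ?thesis unfolding \<Phi>_def using dj jj by auto
    qed
    moreover have "\<not> \<Phi> j' (n - 1)"
    proof -
      have "reach (L j') NN s (j' + s) j'" using R4[of j' s j'] j unfolding s_def by auto
      moreover have "j' + s = n - 1" using j unfolding s_def by auto
      ultimately show ?thesis unfolding \<Phi>_def using dj jj by auto
    qed
    moreover have "\<not> \<Phi> j' x" if "x < n" "x \<noteq> 0" "x \<noteq> n - 1" for x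
      unfolding \<Phi>_def using deg_low_one[of x j'] that jj by auto
    ultimately show ?thesis by auto
  qed
  show False using c2 unfolding split_card[of "\<Phi> j"] split_card[of "\<Phi> j'"] l1 l2 h by simp
qed

end



definition PP :: "nat \<Rightarrow> (nat \<Rightarrow> nat) \<Rightarrow> nat set \<Rightarrow> graph" where
  "PP n \<sigma> B x y \<longleftrightarrow>
     (\<exists>i. ((x = \<sigma> i \<and> y = \<sigma> (Suc i)) \<or> (y = \<sigma> i \<and> x = \<sigma> (Suc i))) \<and>
              (Suc i < n \<or> (n \<le> i \<and> Suc i < 2*n \<and> i \<notin> B)))"

definition Gr :: "nat \<Rightarrow> (nat \<Rightarrow> nat) \<Rightarrow> nat set \<Rightarrow> nat \<Rightarrow> nat \<Rightarrow> graph" where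
  "Gr n \<sigma> B u v x y \<longleftrightarrow> PP n \<sigma> B x y \<or> (x = \<sigma> u \<and> y = \<sigma> v) \<or> (y = \<sigma> u \<and> x = \<sigma> v)"

definition ok :: "nat \<Rightarrow> (nat \<Rightarrow> nat) \<Rightarrow> nat set \<Rightarrow> nat \<Rightarrow> nat \<Rightarrow> bool" where
  "ok n \<sigma> B u v \<longleftrightarrow> bij_betw \<sigma> {0..<2*n} {0..<2*n} \<and> B \<subseteq> {n..<2*n} \<and> n \<le> u \<and> u < 2*n \<and> v < n"

lemma F_iff: "E \<in> F_class n \<longleftrightarrow> (\<exists>\<sigma> B u v. ok n \<sigma> B u v \<and> E = Gr n \<sigma> B u v)"
  unfolding F_class_def ok_def Gr_def PP_def by (simp only: fun_eq_iff mem_Collect_eq) blast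

lemma Gr_sym: "Gr n \<sigma> B u v x y = Gr n \<sigma> B u v y x"
  unfolding Gr_def PP_def by blast

lemma Gr_relabel:
  assumes "ok n \<sigma> B u v" "a < 2*n" "b < 2*n"
  shows "Gr n \<sigma> B u v (\<sigma> a) (\<sigma> b) = Lay n B u v a b"
proof -
  have inj: "inj_on \<sigma> {0..<2*n}" using assms(1) unfolding ok_def bij_betw_def by auto
  have eq: "\<And>p q. p < 2*n \<Longrightarrow> q < 2*n \<Longrightarrow> \<sigma> p = \<sigma> q \<longleftrightarrow> p = q"
    using inj inj_on_eq_iff by fastforce
  have uv: "u < 2*n" "v < 2*n" using assms(1) unfolding ok_def by auto
  show ?thesis
  proof
    assume "Gr n \<sigma> B u v (\<sigma> a) (\<sigma> b)"
    then consider i where "(\<sigma> a = \<sigma> i \<and> \<sigma> b = \<sigma> (Suc i)) \<or> (\<sigma> b = \<sigma> i \<and> \<sigma> a = \<sigma> (Suc i))"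
          "Suc i < n \<or> (n \<le> i \<and> Suc i < 2*n \<and> i \<notin> B)"
      | "\<sigma> a = \<sigma> u \<and> \<sigma> b = \<sigma> v" | "\<sigma> b = \<sigma> u \<and> \<sigma> a = \<sigma> v"
      unfolding Gr_def PP_def by blast
    then show "Lay n B u v a b"
    proof cases
      case 1
      then have "Suc i < 2*n" by auto
      then show ?thesis using 1 eq[of a i] eq[of b "Suc i"] eq[of b i] eq[of a "Suc i"] assms
        unfolding Lay_def pe_def by auto
    next
      case 2 then show ?thesis using eq[of a u] eq[of b v] uv assms unfolding Lay_def by auto
    next
      case 3 then show ?thesis using eq[of b u] eq[of a v] uv assms unfolding Lay_def by auto
    qed
  next
    assume "Lay n B u v a b"
    then show "Gr n \<sigma> B u v (\<sigma> a) (\<sigma> b)"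
      unfolding Lay_def pe_def Gr_def PP_def by blast
  qed
qed

lemma Gr_bound:
  assumes "ok n \<sigma> B u v" "Gr n \<sigma> B u v x y"
  shows "x < 2*n \<and> y < 2*n"
proof -
  have im: "\<And>p. p < 2*n \<Longrightarrow> \<sigma> p < 2*n" using assms(1) unfolding ok_def bij_betw_def by auto
  have uv: "u < 2*n" "v < 2*n" using assms(1) unfolding ok_def by auto
  from assms(2) show ?thesis unfolding Gr_def PP_def
    by (elim disjE exE conjE) (use im uv in \<open>auto intro!: im\<close>)
qed

lemma F_finite: "finite (F_class n)"
proof -
  have sub: "F_class n \<subseteq> {E. \<forall>x y. E x y \<longrightarrow> x < 2*n \<and> y < 2*n}"
  proof
    fix E assume "E \<in> F_class n"
    then obtain \<sigma> B u v where "ok n \<sigma> B u v" "E = Gr n \<sigma> B u v" using F_iff by blast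
    then show "E \<in> {E. \<forall>x y. E x y \<longrightarrow> x < 2*n \<and> y < 2*n}" using Gr_bound by blast
  qed
  have "inj_on (\<lambda>E. {(x, y). E x y}) {E. \<forall>x y. E x y \<longrightarrow> x < 2*n \<and> y < 2*n}"
    by (rule inj_onI) (auto simp: fun_eq_iff set_eq_iff)
  moreover have "(\<lambda>E. {(x, y). E x y}) ` {E. \<forall>x y. E x y \<longrightarrow> x < 2*n \<and> y < 2*n} \<subseteq> Pow ({..<2*n} \<times> {..<2*n})"
    by auto
  ultimately have "finite {E. \<forall>x y. E x y \<longrightarrow> x < 2*n \<and> y < 2*n}"
    by (rule inj_on_finite) simp
  then show ?thesis using sub finite_subset by blast
qed

lemma card2: "card {a, b} \<le> 2"
  by (cases "a = b") auto

lemma Gr_diff: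
  "card {(i, k). i < N \<and> k < N \<and> Gr n \<sigma> B u v1 i k \<and> \<not> Gr n \<sigma> B u v2 i k} \<le> 2"
proof -
  have pw: "(i = \<sigma> u \<and> k = \<sigma> v1) \<or> (k = \<sigma> u \<and> i = \<sigma> v1)"
    if a: "Gr n \<sigma> B u v1 i k" "\<not> Gr n \<sigma> B u v2 i k" for i k
  proof -
    have "\<not> PP n \<sigma> B i k" using a(2) unfolding Gr_def by simp
    then show ?thesis using a(1) unfolding Gr_def by simp
  qed
  have sub: "{(i, k). i < N \<and> k < N \<and> Gr n \<sigma> B u v1 i k \<and> \<not> Gr n \<sigma> B u v2 i k} \<subseteq> {(\<sigma> u, \<sigma> v1), (\<sigma> v1, \<sigma> u)}"
  proof (rule subsetI)
    fix z assume "z \<in> {(i, k). i < N \<and> k < N \<and> Gr n \<sigma> B u v1 i k \<and> \<not> Gr n \<sigma> B u v2 i k}"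
    then obtain i k where z: "z = (i, k)" "Gr n \<sigma> B u v1 i k" "\<not> Gr n \<sigma> B u v2 i k" by blast
    from pw[OF z(2,3)] show "z \<in> {(\<sigma> u, \<sigma> v1), (\<sigma> v1, \<sigma> u)}" unfolding z(1) by blast
  qed
  have "card {(i, k). i < N \<and> k < N \<and> Gr n \<sigma> B u v1 i k \<and> \<not> Gr n \<sigma> B u v2 i k} \<le> card {(\<sigma> u, \<sigma> v1), (\<sigma> v1, \<sigma> u)}"
    by (rule card_mono[OF _ sub]) simp
  also have "\<dots> \<le> 2" by (rule card2)
  finally show ?thesis .
qed

lemma wl_equiv_sym: "wl_equiv N G H \<Longrightarrow> wl_equiv N H G"
  unfolding wl_equiv_def by simp

lemma moves_distinct:
  assumes ok: "ok n \<sigma> B u v" and j: "j < (n + 1) div 2" "j' < (n + 1) div 2" "j \<noteq> j'"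
  shows "\<not> wl_equiv (2*n) (Gr n \<sigma> B u j) (Gr n \<sigma> B u j')"
proof -
  have bij: "bij_betw \<sigma> {0..<2*n} {0..<2*n}" and u: "n \<le> u" "u < 2*n" using ok unfolding ok_def by auto
  have okk: "ok n \<sigma> B u k" if "k < n" for k using ok that unfolding ok_def by auto
  have jn: "j < n" "j' < n" using j by auto
  have red: "wl_equiv (2*n) (Gr n \<sigma> B u k) (Gr n \<sigma> B u k') \<longleftrightarrow> wl_equiv (2*n) (Lay n B u k) (Lay n B u k')"
    if "k < n" "k' < n" for k k'
    by (rule wl_equiv_relabel[OF bij]) (simp_all add: Gr_relabel[OF okk[OF that(1)]] Gr_relabel[OF okk[OF that(2)]])
  have main: "\<not> wl_equiv (2*n) (Lay n B u k) (Lay n B u k')" if "k < k'" "k' < (n + 1) div 2" for k k'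
  proof (cases "k = 0")
    case True
    have "0 < k'" "Suc k' < n" using that by auto
    then show ?thesis using distinct_a[OF u] True by blast
  next
    case False
    have "0 < k" "2 * k' < n" using that False by auto
    then show ?thesis using distinct_b[OF u _ that(1)] by blast
  qed
  show ?thesis
  proof (cases "j < j'")
    case True then show ?thesis using red[OF jn] main[OF True j(2)] by simp
  next
    case False
    then have "j' < j" using j by simp
    then show ?thesis using red[OF jn] main[OF _ j(1)] wl_equiv_sym by blast
  qed
qed



lemma Gr_in_F: "ok n \<sigma> B u v \<Longrightarrow> Gr n \<sigma> B u v \<in> F_class n"
  using F_iff by blast

lemma close_gen:
  assumes "wl_equiv N (Gr n s1 B1 u1 j) (Gr n s2 B2 u2 j')"
  shows "tree_dist N (Gr n s1 B1 u1 v1) (Gr n s2 B2 u2 v2) \<le> 4"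
proof (rule chain)
  show "\<And>x y. Gr n s1 B1 u1 j x y = Gr n s1 B1 u1 j y x" "\<And>x y. Gr n s2 B2 u2 j' x y = Gr n s2 B2 u2 j' y x"
    by (simp_all add: Gr_sym)
  show "wl_equiv N (Gr n s1 B1 u1 j) (Gr n s2 B2 u2 j')" by fact
qed (rule Gr_diff)+

lemma self_gen:
  "tree_dist N (Gr n s1 B1 u1 v1) (Gr n s1 B1 u1 v1) \<le> 4"
  by (rule close_gen[where j=v1 and j'=v1]) (simp add: wl_equiv_def)

theorem mainTheorem12:
  fixes n :: nat
  assumes "n \<ge> 1"
  shows "real (covering_number (F_class n) (tree_dist (2*n)) 4)
           \<le> 2 * real (card (F_class n // wl_indist_rel (2*n) (F_class n))) / real n"
proof -
  define F where "F = F_class n"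
  define N where "N = 2 * n"
  define rel where "rel = wl_indist_rel N F"
  have finF: "finite F" unfolding F_def by (rule F_finite)
  have "\<forall>p\<in>F. \<exists>w. ok n (fst w) (fst (snd w)) (fst (snd (snd w))) (snd (snd (snd w))) \<and>
          p = Gr n (fst w) (fst (snd w)) (fst (snd (snd w))) (snd (snd (snd w)))"
  proof
    fix p assume "p \<in> F"
    then obtain \<sigma> B u v where "ok n \<sigma> B u v" "p = Gr n \<sigma> B u v" unfolding F_def using F_iff by blast
    then show "\<exists>w. ok n (fst w) (fst (snd w)) (fst (snd (snd w))) (snd (snd (snd w))) \<and>
          p = Gr n (fst w) (fst (snd w)) (fst (snd (snd w))) (snd (snd (snd w)))"
      by (intro exI[of _ "(\<sigma>, B, u, v)"]) simp
  qed
  from bchoice[OF this] obtain W where W: "\<forall>p\<in>F. ok n (fst (W p)) (fst (snd (W p))) (fst (snd (snd (W p)))) (snd (snd (snd (W p))))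
      \<and> p = Gr n (fst (W p)) (fst (snd (W p))) (fst (snd (snd (W p)))) (snd (snd (snd (W p))))"
    by blast
  define sg where "sg p = fst (W p)" for p
  define Bf where "Bf p = fst (snd (W p))" for p
  define uf where "uf p = fst (snd (snd (W p)))" for p
  define vf where "vf p = snd (snd (snd (W p)))" for p
  have okp: "ok n (sg p) (Bf p) (uf p) (vf p)" and pG: "Gr n (sg p) (Bf p) (uf p) (vf p) = p" if "p \<in> F" for p
    using W that unfolding sg_def Bf_def uf_def vf_def by auto
  define mv where "mv p j = Gr n (sg p) (Bf p) (uf p) j" for p j
  have okm: "ok n (sg p) (Bf p) (uf p) j" if "p \<in> F" "j < n" for p j
    using okp[OF that(1)] that(2) unfolding ok_def by auto
  have mvF: "mv p j \<in> F" if "p \<in> F" "j < n" for p j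
    unfolding mv_def F_def using Gr_in_F[OF okm[OF that]] .
  have close: "tree_dist N p q \<le> 4" if "p \<in> F" "q \<in> F" "wl_equiv N (mv p j) (mv q j')" for p q j j'
  proof -
    have "tree_dist N (Gr n (sg p) (Bf p) (uf p) (vf p)) (Gr n (sg q) (Bf q) (uf q) (vf q)) \<le> 4"
      using close_gen that(3) unfolding mv_def by blast
    then show ?thesis by (simp only: pG[OF that(1)] pG[OF that(2)])
  qed
  have self: "tree_dist N G G \<le> 4" if "G \<in> F" for G
    using self_gen[of N n "sg G" "Bf G" "uf G" "vf G"] by (simp only: pG[OF that])
  define pk where "pk P \<longleftrightarrow> (\<forall>p\<in>P. \<forall>q\<in>P. p \<noteq> q \<longrightarrow> \<not> (tree_dist N p q \<le> 4 \<and> tree_dist N q p \<le> 4))" for P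
  define Pk where "Pk = {P. P \<subseteq> F \<and> pk P}"
  have finPk: "finite Pk" unfolding Pk_def using finF by (auto intro: finite_subset[of _ "Pow F"])
  have "{} \<in> Pk" unfolding Pk_def pk_def by auto
  then have nePk: "Pk \<noteq> {}" by auto
  have "Max (card ` Pk) \<in> card ` Pk" using finPk nePk by (intro Max_in) auto
  then obtain P where PPk: "P \<in> Pk" and Pmax: "card P = Max (card ` Pk)" by (auto simp del: Max_in)
  have PF: "P \<subseteq> F" and pkP: "pk P" using PPk unfolding Pk_def by auto
  have finP: "finite P" using PF finF finite_subset by blast
  have cover: "\<exists>p\<in>P. tree_dist N G p \<le> 4" if G: "G \<in> F" for G
  proof (cases "G \<in> P")
    case True then show ?thesis using self[OF G] by blast
  next
    case False
    show ?thesis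
    proof (rule ccontr)
      assume nc: "\<not> ?thesis"
      have "pk (insert G P)"
        unfolding pk_def
      proof (intro ballI impI)
        fix p q assume "p \<in> insert G P" "q \<in> insert G P" "p \<noteq> q"
        then show "\<not> (tree_dist N p q \<le> 4 \<and> tree_dist N q p \<le> 4)"
          using pkP nc unfolding pk_def by auto
      qed
      then have "insert G P \<in> Pk" using G PF unfolding Pk_def by auto
      then have "card (insert G P) \<le> Max (card ` Pk)" using finPk by auto
      then show False using Pmax False finP by simp
    qed
  qed
  have cov: "covering_number F (tree_dist N) 4 \<le> card P"
    unfolding covering_number_def
    by (rule Least_le) (use PF finP cover in blast)
  define J where "J = {0..<(n + 1) div 2}"
  have Jn: "j < n" if "j \<in> J" for j using that unfolding J_def by auto
  define cls where "cls z = rel `` {mv (fst z) (snd z)}" for z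
  have clsQ: "cls z \<in> F // rel" if "z \<in> P \<times> J" for z
    unfolding cls_def using that PF Jn mvF by (auto intro!: quotientI)
  have injc: "inj_on cls (P \<times> J)"
  proof (rule inj_onI)
    fix z z' assume z: "z \<in> P \<times> J" and z': "z' \<in> P \<times> J" and eq: "cls z = cls z'"
    obtain p j where zz: "z = (p, j)" "p \<in> P" "j \<in> J" using z by auto
    obtain q j' where zz': "z' = (q, j')" "q \<in> P" "j' \<in> J" using z' by auto
    have pF: "p \<in> F" "q \<in> F" using zz zz' PF by auto
    have jn: "j < n" "j' < n" using zz zz' Jn by auto
    have "mv q j' \<in> cls z'" unfolding cls_def rel_def wl_indist_rel_def zz'(1)
      using mvF[OF pF(2) jn(2)] by (auto simp: wl_equiv_def)
    then have "mv q j' \<in> cls z" using eq by simp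
    then have weq: "wl_equiv N (mv p j) (mv q j')" unfolding cls_def rel_def wl_indist_rel_def zz(1) by auto
    show "z = z'"
    proof (cases "p = q")
      case False
      have "tree_dist N p q \<le> 4" using close[OF pF weq] .
      moreover have "tree_dist N q p \<le> 4" using close[OF pF(2) pF(1) wl_equiv_sym[OF weq]] .
      ultimately show ?thesis using pkP zz zz' False unfolding pk_def by blast
    next
      case True
      show ?thesis
      proof (rule ccontr)
        assume "z \<noteq> z'"
        then have "j \<noteq> j'" using zz zz' True by auto
        moreover have "j < (n + 1) div 2" "j' < (n + 1) div 2" using zz zz' unfolding J_def by auto
        ultimately have "\<not> wl_equiv (2 * n) (Gr n (sg p) (Bf p) (uf p) j) (Gr n (sg p) (Bf p) (uf p) j')"
          using moves_distinct[OF okp[OF pF(1)]] by blast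
        then show False using weq True unfolding mv_def N_def by simp
      qed
    qed
  qed
  have finQ: "finite (F // rel)"
  proof -
    have "F // rel \<subseteq> Pow F" unfolding quotient_def rel_def wl_indist_rel_def by auto
    then show ?thesis using finF by (meson finite_Pow_iff finite_subset)
  qed
  have "card (P \<times> J) \<le> card (F // rel)"
    by (rule card_inj_on_le[OF injc _ finQ]) (use clsQ in blast)
  then have PJ: "card P * ((n + 1) div 2) \<le> card (F // rel)" unfolding J_def by (simp add: card_cartesian_product)
  have nle: "n \<le> 2 * ((n + 1) div 2)" by simp
  have "covering_number F (tree_dist N) 4 * n \<le> card P * (2 * ((n + 1) div 2))"
    using cov nle by (intro mult_le_mono) auto
  also have "\<dots> \<le> 2 * card (F // rel)" using PJ by simp
  finally have key: "real (covering_number F (tree_dist N) 4) * real n \<le> 2 * real (card (F // rel))"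
    by (metis of_nat_le_iff of_nat_mult of_nat_numeral)
  have npos: "real n > 0" using assms by simp
  show ?thesis using key npos unfolding F_def N_def rel_def by (simp add: pos_le_divide_eq mult.commute)
qed

end
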